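(* For every $\varphi \in \Lambda^2_+\mathbb{R}^8$ and all $k,l \in \{1,\dots,8\}$, \[2 \, P_+ \big( e_k \wedge (i_{e_l}\varphi) + e_l \wedge (i_{e_k}\varphi) \big) = \delta_{kl}\,\varphi,\] where $e_1,\dots,e_8$ is the standard orthonormal basis of $\mathbb{R}^8$ (identified with the dual basis via the Euclidean metric), $i_X$ denotes interior multiplication, and $P_+$ is the projection onto $\Lambda^2_+\mathbb{R}^8$ defined in the context.
   Context: Write $\mathbb{R}^8 = E \oplus E^\perp$ with orthonormal basis $e_1,\dots,e_4$ of $E$ and $e_1^\perp,\dots,e_4^\perp$ of $E^\perp$, and set $e_5=e_1^\perp, e_6=e_2^\perp, e_7=e_3^\perp, e_8=e_4^\perp$. The $4$-form $\Omega$ is $\Omega = -e_1 e_2 e_1^\perp e_2^\perp - e_1 e_2 e_3^\perp e_4^\perp - e_3 e_4 e_1^\perp e_2^\perp - e_3 e_4 e_3^\perp e_4^\perp + e_1 e_3 e_2^\perp e_4^\perp - e_1 e_3 e_1^\perp e_3^\perp - e_2 e_4 e_2^\perp e_4^\perp + e_2 e_4 e_1^\perp e_3^\perp - e_1 e_4 e_2^\perp e_3^\perp - e_1 e_4 e_1^\perp e_4^\perp - e_2 e_3 e_2^\perp e_3^\perp - e_2 e_3 e_1^\perp e_4^\perp + e_1 e_2 e_3 e_4 + e_1^\perp e_2^\perp e_3^\perp e_4^\perp$, where juxtaposition denotes wedge product. Let $*$ be the Euclidean Hodge star (orientation $e_1\wedge\dots\wedge e_4\wedge e_1^\perp\wedge\dots\wedge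 e_4^\perp$). Define $\Lambda^2_+\mathbb{R}^8 = \{\varphi: 3\varphi - *(\Omega\wedge\varphi)=0\}$ (dimension 7) and $\Lambda^2_-\mathbb{R}^8=\{\varphi: \varphi + *(\Omega\wedge\varphi)=0\}$ (dimension 21); then $\Lambda^2\mathbb{R}^8=\Lambda^2_+\oplus\Lambda^2_-$ and the projection onto $\Lambda^2_+$ is $P_+\varphi = \frac14(\varphi + *(\Omega\wedge\varphi))$. *)

theory Defs
  imports Complex_Main
begin

text \<open>Exterior algebra of R^8 with standard orthonormal basis e_1..e_8 (indices 1..8).
  A form is represented by its coefficient function on index sets: the form
  a corresponds to the sum over finite S of a S times e_S, where e_S is the
  wedge of the e_i, i in S, taken in increasing order.  Genuine forms on R^8
  are supported on subsets of {1..8}.\<close>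

type_synonym form = "nat set \<Rightarrow> real"

definition is_kform :: "nat \<Rightarrow> form \<Rightarrow> bool" where
  "is_kform k a \<longleftrightarrow> (\<forall>S. a S \<noteq> 0 \<longrightarrow> S \<subseteq> {1..8} \<and> card S = k)"

text \<open>Sign of the permutation sorting the concatenation of (sorted) A and B.\<close>
definition shuffle_sign :: "nat set \<Rightarrow> nat set \<Rightarrow> real" where
  "shuffle_sign A B = (-1) ^ card {(a, b). a \<in> A \<and> b \<in> B \<and> b < a}"

definition bas :: "nat \<Rightarrow> form" where
  "bas i = (\<lambda>S. if S = {i} then 1 else 0)"

definition wedge :: "form \<Rightarrow> form \<Rightarrow> form" (infixr "\<and>\<^sub>w" 70) where
  "wedge a b = (\<lambda>S. \<Sum>A\<in>Pow S. shuffle_sign A (S - A) * a A * b (S - A))"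

definition fadd :: "form \<Rightarrow> form \<Rightarrow> form" (infixl "+\<^sub>f" 65) where
  "fadd a b = (\<lambda>S. a S + b S)"

definition fsub :: "form \<Rightarrow> form \<Rightarrow> form" (infixl "-\<^sub>f" 65) where
  "fsub a b = (\<lambda>S. a S - b S)"

definition fscale :: "real \<Rightarrow> form \<Rightarrow> form" (infixr "*\<^sub>f" 75) where
  "fscale c a = (\<lambda>S. c * a S)"

definition fzero :: form where
  "fzero = (\<lambda>S. 0)"

text \<open>Euclidean Hodge star, orientation e_1 ^ ... ^ e_8:
  star e_S = shuffle_sign S S^c e_{S^c}.\<close>
definition hodge :: "form \<Rightarrow> form" where
  "hodge a = (\<lambda>T. if T \<subseteq> {1..8} then shuffle_sign ({1..8} - T) T * a ({1..8} - T) else 0)"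

definition interior :: "nat \<Rightarrow> form \<Rightarrow> form" where
  "interior l a = (\<lambda>T. if l \<notin> T then (-1) ^ card {t \<in> T. t < l} * a (insert l T) else 0)"

text \<open>The 4-form Omega, with e_5,...,e_8 = e_1^perp,...,e_4^perp.\<close>
definition mono4 :: "nat \<Rightarrow> nat \<Rightarrow> nat \<Rightarrow> nat \<Rightarrow> form" where
  "mono4 a b c d = bas a \<and>\<^sub>w bas b \<and>\<^sub>w bas c \<and>\<^sub>w bas d"

definition Omega :: form where
  "Omega =
     (-1) *\<^sub>f mono4 1 2 5 6 -\<^sub>f mono4 1 2 7 8 -\<^sub>f mono4 3 4 5 6 -\<^sub>f mono4 3 4 7 8
     +\<^sub>f mono4 1 3 6 8 -\<^sub>f mono4 1 3 5 7 -\<^sub>f mono4 2 4 6 8 +\<^sub>f mono4 2 4 5 7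
     -\<^sub>f mono4 1 4 6 7 -\<^sub>f mono4 1 4 5 8 -\<^sub>f mono4 2 3 6 7 -\<^sub>f mono4 2 3 5 8
     +\<^sub>f mono4 1 2 3 4 +\<^sub>f mono4 5 6 7 8"

definition Lambda2_plus :: "form set" where
  "Lambda2_plus = {\<phi>. is_kform 2 \<phi> \<and> (3 *\<^sub>f \<phi>) -\<^sub>f hodge (Omega \<and>\<^sub>w \<phi>) = fzero}"

definition Pplus :: "form \<Rightarrow> form" where
  "Pplus \<phi> = (1/4) *\<^sub>f (\<phi> +\<^sub>f hodge (Omega \<and>\<^sub>w \<phi>))"

end

theory Submission
  imports Defs
begin

definition ind :: "nat set \<Rightarrow> real \<Rightarrow> form" where
  "ind A c = (\<lambda>T. if T = A then c else 0)"

lemma card_filter_empty: "card {b \<in> {}. P b} = 0" by simp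

lemma card_filter_insert:
  assumes "finite B"
  shows "card {b \<in> insert x B. P b} = (if x \<notin> B \<and> P x then Suc (card {b\<in>B. P b}) else card {b\<in>B. P b})"
proof -
  have "{b \<in> insert x B. P b} = (if P x then insert x {b\<in>B. P b} else {b\<in>B. P b})" by auto
  then show ?thesis using assms by (auto simp: card_insert_if)
qed

lemma shuffle_sign_sum:
  assumes "finite A" "finite B"
  shows "shuffle_sign A B = (-1) ^ (\<Sum>a\<in>A. \<Sum>b\<in>B. if b < a then 1 else 0)"
proof -
  have "{(a, b). a \<in> A \<and> b \<in> B \<and> b < a} = Sigma A (\<lambda>a. {b\<in>B. b < a})" by auto
  moreover have "card {b\<in>B. b < a} = (\<Sum>b\<in>B. if b < a then 1 else 0)" for a
    using assms by (simp add: sum.If_cases Int_def conj_commute)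
  ultimately show ?thesis unfolding shuffle_sign_def using assms by simp
qed

lemma wedge_ind:
  "(ind A c \<and>\<^sub>w b) S = (if finite S \<and> A \<subseteq> S then c * shuffle_sign A (S - A) * b (S - A) else 0)"
proof (cases "finite S")
  case False
  then have "infinite (Pow S)" by simp
  then show ?thesis using False unfolding wedge_def by simp
next
  case True
  have "(ind A c \<and>\<^sub>w b) S = (\<Sum>A'\<in>Pow S. if A' = A then shuffle_sign A (S - A) * c * b (S - A) else 0)"
    unfolding wedge_def ind_def by (rule sum.cong) auto
  also have "\<dots> = (if A \<subseteq> S then c * shuffle_sign A (S - A) * b (S - A) else 0)"
    using True by (simp add: sum.delta')
  finally show ?thesis using True by simp
qed

lemma bas_ind: "bas i = ind {i} 1" unfolding bas_def ind_def by simp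

lemma wedge_fadd: "((a +\<^sub>f b) \<and>\<^sub>w c) S = (a \<and>\<^sub>w c) S + (b \<and>\<^sub>w c) S"
  unfolding wedge_def fadd_def by (simp add: algebra_simps sum.distrib)
lemma wedge_fsub: "((a -\<^sub>f b) \<and>\<^sub>w c) S = (a \<and>\<^sub>w c) S - (b \<and>\<^sub>w c) S"
  unfolding wedge_def fsub_def by (simp add: algebra_simps sum_subtractf)
lemma wedge_fscale: "((r *\<^sub>f a) \<and>\<^sub>w c) S = r * (a \<and>\<^sub>w c) S"
  unfolding wedge_def fscale_def by (simp add: algebra_simps sum_distrib_left)

lemma bas_wedge_ind:
  assumes "a \<notin> A" "finite A"
  shows "bas a \<and>\<^sub>w ind A c = ind (insert a A) (c * shuffle_sign {a} A)"
proof
  fix S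
  show "(bas a \<and>\<^sub>w ind A c) S = ind (insert a A) (c * shuffle_sign {a} A) S"
    unfolding bas_ind wedge_ind using assms
    by (auto simp: ind_def)
qed

lemma mono4_1256: "mono4 1 2 5 6 = ind {1,2,5,6} 1"
  unfolding mono4_def by (simp add: bas_wedge_ind bas_ind[of 6] shuffle_sign_sum)

lemma mono4_1278: "mono4 1 2 7 8 = ind {1,2,7,8} 1"
  unfolding mono4_def by (simp add: bas_wedge_ind bas_ind[of 8] shuffle_sign_sum)

lemma mono4_3456: "mono4 3 4 5 6 = ind {3,4,5,6} 1"
  unfolding mono4_def by (simp add: bas_wedge_ind bas_ind[of 6] shuffle_sign_sum)

lemma mono4_3478: "mono4 3 4 7 8 = ind {3,4,7,8} 1"
  unfolding mono4_def by (simp add: bas_wedge_ind bas_ind[of 8] shuffle_sign_sum)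

lemma mono4_1368: "mono4 1 3 6 8 = ind {1,3,6,8} 1"
  unfolding mono4_def by (simp add: bas_wedge_ind bas_ind[of 8] shuffle_sign_sum)

lemma mono4_1357: "mono4 1 3 5 7 = ind {1,3,5,7} 1"
  unfolding mono4_def by (simp add: bas_wedge_ind bas_ind[of 7] shuffle_sign_sum)

lemma mono4_2468: "mono4 2 4 6 8 = ind {2,4,6,8} 1"
  unfolding mono4_def by (simp add: bas_wedge_ind bas_ind[of 8] shuffle_sign_sum)

lemma mono4_2457: "mono4 2 4 5 7 = ind {2,4,5,7} 1"
  unfolding mono4_def by (simp add: bas_wedge_ind bas_ind[of 7] shuffle_sign_sum)

lemma mono4_1467: "mono4 1 4 6 7 = ind {1,4,6,7} 1"
  unfolding mono4_def by (simp add: bas_wedge_ind bas_ind[of 7] shuffle_sign_sum)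

lemma mono4_1458: "mono4 1 4 5 8 = ind {1,4,5,8} 1"
  unfolding mono4_def by (simp add: bas_wedge_ind bas_ind[of 8] shuffle_sign_sum)

lemma mono4_2367: "mono4 2 3 6 7 = ind {2,3,6,7} 1"
  unfolding mono4_def by (simp add: bas_wedge_ind bas_ind[of 7] shuffle_sign_sum)

lemma mono4_2358: "mono4 2 3 5 8 = ind {2,3,5,8} 1"
  unfolding mono4_def by (simp add: bas_wedge_ind bas_ind[of 8] shuffle_sign_sum)

lemma mono4_1234: "mono4 1 2 3 4 = ind {1,2,3,4} 1"
  unfolding mono4_def by (simp add: bas_wedge_ind bas_ind[of 4] shuffle_sign_sum)

lemma mono4_5678: "mono4 5 6 7 8 = ind {5,6,7,8} 1"
  unfolding mono4_def by (simp add: bas_wedge_ind bas_ind[of 8] shuffle_sign_sum)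


lemma U8: "{1..8::nat} = {1,2,3,4,5,6,7,8}" by auto

lemmas hodge_O1 = hodge_def U8 Omega_def 
  mono4_1256 mono4_1278 mono4_3456 mono4_3478 mono4_1368 mono4_1357 mono4_2468 mono4_2457
  mono4_1467 mono4_1458 mono4_2367 mono4_2358 mono4_1234 mono4_5678
lemmas hodge_O2 = wedge_fadd wedge_fsub wedge_fscale wedge_ind shuffle_sign_sum insert_Diff_if

lemma hO_12: "hodge (Omega \<and>\<^sub>w \<psi>) {1,2} = - \<psi> {7,8} - \<psi> {5,6} + \<psi> {3,4}"
  by (unfold hodge_O1) (simp add: hodge_O2)

lemma hO_13: "hodge (Omega \<and>\<^sub>w \<psi>) {1,3} = - \<psi> {5,7} + \<psi> {6,8} - \<psi> {2,4}"
  by (unfold hodge_O1) (simp add: hodge_O2)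

lemma hO_14: "hodge (Omega \<and>\<^sub>w \<psi>) {1,4} = - \<psi> {5,8} - \<psi> {6,7} + \<psi> {2,3}"
  by (unfold hodge_O1) (simp add: hodge_O2)

lemma hO_15: "hodge (Omega \<and>\<^sub>w \<psi>) {1,5} = \<psi> {2,6} + \<psi> {3,7} + \<psi> {4,8}"
  by (unfold hodge_O1) (simp add: hodge_O2)

lemma hO_16: "hodge (Omega \<and>\<^sub>w \<psi>) {1,6} = - \<psi> {2,5} - \<psi> {3,8} + \<psi> {4,7}"
  by (unfold hodge_O1) (simp add: hodge_O2)

lemma hO_17: "hodge (Omega \<and>\<^sub>w \<psi>) {1,7} = \<psi> {2,8} - \<psi> {3,5} - \<psi> {4,6}"
  by (unfold hodge_O1) (simp add: hodge_O2)

lemma hO_18: "hodge (Omega \<and>\<^sub>w \<psi>) {1,8} = - \<psi> {2,7} + \<psi> {3,6} - \<psi> {4,5}"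
  by (unfold hodge_O1) (simp add: hodge_O2)

lemma hO_23: "hodge (Omega \<and>\<^sub>w \<psi>) {2,3} = - \<psi> {5,8} - \<psi> {6,7} + \<psi> {1,4}"
  by (unfold hodge_O1) (simp add: hodge_O2)

lemma hO_24: "hodge (Omega \<and>\<^sub>w \<psi>) {2,4} = \<psi> {5,7} - \<psi> {6,8} - \<psi> {1,3}"
  by (unfold hodge_O1) (simp add: hodge_O2)

lemma hO_25: "hodge (Omega \<and>\<^sub>w \<psi>) {2,5} = - \<psi> {1,6} - \<psi> {4,7} + \<psi> {3,8}"
  by (unfold hodge_O1) (simp add: hodge_O2)

lemma hO_26: "hodge (Omega \<and>\<^sub>w \<psi>) {2,6} = \<psi> {1,5} + \<psi> {4,8} + \<psi> {3,7}"
  by (unfold hodge_O1) (simp add: hodge_O2)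

lemma hO_27: "hodge (Omega \<and>\<^sub>w \<psi>) {2,7} = - \<psi> {1,8} + \<psi> {4,5} - \<psi> {3,6}"
  by (unfold hodge_O1) (simp add: hodge_O2)

lemma hO_28: "hodge (Omega \<and>\<^sub>w \<psi>) {2,8} = \<psi> {1,7} - \<psi> {4,6} - \<psi> {3,5}"
  by (unfold hodge_O1) (simp add: hodge_O2)

lemma hO_34: "hodge (Omega \<and>\<^sub>w \<psi>) {3,4} = - \<psi> {7,8} - \<psi> {5,6} + \<psi> {1,2}"
  by (unfold hodge_O1) (simp add: hodge_O2)

lemma hO_35: "hodge (Omega \<and>\<^sub>w \<psi>) {3,5} = \<psi> {4,6} - \<psi> {1,7} - \<psi> {2,8}"
  by (unfold hodge_O1) (simp add: hodge_O2)

lemma hO_36: "hodge (Omega \<and>\<^sub>w \<psi>) {3,6} = - \<psi> {4,5} + \<psi> {1,8} - \<psi> {2,7}"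
  by (unfold hodge_O1) (simp add: hodge_O2)

lemma hO_37: "hodge (Omega \<and>\<^sub>w \<psi>) {3,7} = \<psi> {4,8} + \<psi> {1,5} + \<psi> {2,6}"
  by (unfold hodge_O1) (simp add: hodge_O2)

lemma hO_38: "hodge (Omega \<and>\<^sub>w \<psi>) {3,8} = - \<psi> {4,7} - \<psi> {1,6} + \<psi> {2,5}"
  by (unfold hodge_O1) (simp add: hodge_O2)

lemma hO_45: "hodge (Omega \<and>\<^sub>w \<psi>) {4,5} = - \<psi> {3,6} + \<psi> {2,7} - \<psi> {1,8}"
  by (unfold hodge_O1) (simp add: hodge_O2)

lemma hO_46: "hodge (Omega \<and>\<^sub>w \<psi>) {4,6} = \<psi> {3,5} - \<psi> {2,8} - \<psi> {1,7}"
  by (unfold hodge_O1) (simp add: hodge_O2)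

lemma hO_47: "hodge (Omega \<and>\<^sub>w \<psi>) {4,7} = - \<psi> {3,8} - \<psi> {2,5} + \<psi> {1,6}"
  by (unfold hodge_O1) (simp add: hodge_O2)

lemma hO_48: "hodge (Omega \<and>\<^sub>w \<psi>) {4,8} = \<psi> {3,7} + \<psi> {2,6} + \<psi> {1,5}"
  by (unfold hodge_O1) (simp add: hodge_O2)

lemma hO_56: "hodge (Omega \<and>\<^sub>w \<psi>) {5,6} = - \<psi> {3,4} - \<psi> {1,2} + \<psi> {7,8}"
  by (unfold hodge_O1) (simp add: hodge_O2)

lemma hO_57: "hodge (Omega \<and>\<^sub>w \<psi>) {5,7} = \<psi> {2,4} - \<psi> {1,3} - \<psi> {6,8}"
  by (unfold hodge_O1) (simp add: hodge_O2)

lemma hO_58: "hodge (Omega \<and>\<^sub>w \<psi>) {5,8} = - \<psi> {2,3} - \<psi> {1,4} + \<psi> {6,7}"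
  by (unfold hodge_O1) (simp add: hodge_O2)

lemma hO_67: "hodge (Omega \<and>\<^sub>w \<psi>) {6,7} = - \<psi> {2,3} - \<psi> {1,4} + \<psi> {5,8}"
  by (unfold hodge_O1) (simp add: hodge_O2)

lemma hO_68: "hodge (Omega \<and>\<^sub>w \<psi>) {6,8} = - \<psi> {2,4} + \<psi> {1,3} - \<psi> {5,7}"
  by (unfold hodge_O1) (simp add: hodge_O2)

lemma hO_78: "hodge (Omega \<and>\<^sub>w \<psi>) {7,8} = - \<psi> {3,4} - \<psi> {1,2} + \<psi> {5,6}"
  by (unfold hodge_O1) (simp add: hodge_O2)


definition Phi :: "form \<Rightarrow> nat \<Rightarrow> nat \<Rightarrow> real" where
  "Phi \<phi> l b = (if l < b then \<phi> {l,b} else if b < l then - \<phi> {b,l} else 0)"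

lemma interior_single: "interior l \<phi> {b} = Phi \<phi> l b"
proof -
  have "{t \<in> {b}. t < l} = (if b < l then {b} else {})" by auto
  then show ?thesis unfolding interior_def Phi_def by (auto simp: insert_commute)
qed

lemma wedge_bas_pair:
  assumes "a < b"
  shows "(bas k \<and>\<^sub>w y) {a,b} = (if k = a then y {b} else 0) - (if k = b then y {a} else 0)"
proof -
  have "{k} \<subseteq> {a,b} \<longleftrightarrow> k = a \<or> k = b" by auto
  moreover have "k = a \<Longrightarrow> {a,b} - {k} = {b}" "k = b \<Longrightarrow> {a,b} - {k} = {a}" using assms by auto
  ultimately show ?thesis using assms unfolding bas_ind wedge_ind
    by (auto simp: shuffle_sign_sum)
qed

definition xf :: "form \<Rightarrow> nat \<Rightarrow> nat \<Rightarrow> form" where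
  "xf \<phi> k l = (bas k \<and>\<^sub>w interior l \<phi>) +\<^sub>f (bas l \<and>\<^sub>w interior k \<phi>)"

lemma xf_pair:
  assumes "a < b"
  shows "xf \<phi> k l {a,b} = (if k = a then Phi \<phi> l b else 0) - (if k = b then Phi \<phi> l a else 0)
     + (if l = a then Phi \<phi> k b else 0) - (if l = b then Phi \<phi> k a else 0)"
  unfolding xf_def fadd_def using assms by (simp add: wedge_bas_pair interior_single)

lemma Pplus_at: "Pplus x S = 1/4 * (x S + hodge (Omega \<and>\<^sub>w x) S)"
  unfolding Pplus_def fscale_def fadd_def by simp

lemma plus_eq:
  assumes "\<phi> \<in> Lambda2_plus"
  shows "3 * \<phi> S = hodge (Omega \<and>\<^sub>w \<phi>) S"
proof -
  have "((3 *\<^sub>f \<phi>) -\<^sub>f hodge (Omega \<and>\<^sub>w \<phi>)) S = fzero S" using assms unfolding Lambda2_plus_def by simp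
  then show ?thesis unfolding fscale_def fsub_def fzero_def by simp
qed

lemma rels:
  assumes "\<phi> \<in> Lambda2_plus"
  shows r27: "\<phi> {2,7} = - \<phi> {1,8}"
    and r36: "\<phi> {3,6} = \<phi> {1,8}"
    and r45: "\<phi> {4,5} = - \<phi> {1,8}"
    and r28: "\<phi> {2,8} = \<phi> {1,7}"
    and r35: "\<phi> {3,5} = - \<phi> {1,7}"
    and r46: "\<phi> {4,6} = - \<phi> {1,7}"
    and r25: "\<phi> {2,5} = - \<phi> {1,6}"
    and r38: "\<phi> {3,8} = - \<phi> {1,6}"
    and r47: "\<phi> {4,7} = \<phi> {1,6}"
    and r26: "\<phi> {2,6} = \<phi> {1,5}"
    and r37: "\<phi> {3,7} = \<phi> {1,5}"
    and r48: "\<phi> {4,8} = \<phi> {1,5}"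
    and r23: "\<phi> {2,3} = \<phi> {1,4}"
    and r58: "\<phi> {5,8} = - \<phi> {1,4}"
    and r67: "\<phi> {6,7} = - \<phi> {1,4}"
    and r24: "\<phi> {2,4} = - \<phi> {1,3}"
    and r57: "\<phi> {5,7} = - \<phi> {1,3}"
    and r68: "\<phi> {6,8} = \<phi> {1,3}"
    and r34: "\<phi> {3,4} = \<phi> {1,2}"
    and r56: "\<phi> {5,6} = - \<phi> {1,2}"
    and r78: "\<phi> {7,8} = - \<phi> {1,2}"
proof -
  have e12: "3 * \<phi> {1,2} = hodge (Omega \<and>\<^sub>w \<phi>) {1,2}" by (rule plus_eq[OF assms])
  note e12 = e12[unfolded hO_12]
  have e13: "3 * \<phi> {1,3} = hodge (Omega \<and>\<^sub>w \<phi>) {1,3}" by (rule plus_eq[OF assms])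
  note e13 = e13[unfolded hO_13]
  have e14: "3 * \<phi> {1,4} = hodge (Omega \<and>\<^sub>w \<phi>) {1,4}" by (rule plus_eq[OF assms])
  note e14 = e14[unfolded hO_14]
  have e15: "3 * \<phi> {1,5} = hodge (Omega \<and>\<^sub>w \<phi>) {1,5}" by (rule plus_eq[OF assms])
  note e15 = e15[unfolded hO_15]
  have e16: "3 * \<phi> {1,6} = hodge (Omega \<and>\<^sub>w \<phi>) {1,6}" by (rule plus_eq[OF assms])
  note e16 = e16[unfolded hO_16]
  have e17: "3 * \<phi> {1,7} = hodge (Omega \<and>\<^sub>w \<phi>) {1,7}" by (rule plus_eq[OF assms])
  note e17 = e17[unfolded hO_17]
  have e18: "3 * \<phi> {1,8} = hodge (Omega \<and>\<^sub>w \<phi>) {1,8}" by (rule plus_eq[OF assms])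
  note e18 = e18[unfolded hO_18]
  have e23: "3 * \<phi> {2,3} = hodge (Omega \<and>\<^sub>w \<phi>) {2,3}" by (rule plus_eq[OF assms])
  note e23 = e23[unfolded hO_23]
  have e24: "3 * \<phi> {2,4} = hodge (Omega \<and>\<^sub>w \<phi>) {2,4}" by (rule plus_eq[OF assms])
  note e24 = e24[unfolded hO_24]
  have e25: "3 * \<phi> {2,5} = hodge (Omega \<and>\<^sub>w \<phi>) {2,5}" by (rule plus_eq[OF assms])
  note e25 = e25[unfolded hO_25]
  have e26: "3 * \<phi> {2,6} = hodge (Omega \<and>\<^sub>w \<phi>) {2,6}" by (rule plus_eq[OF assms])
  note e26 = e26[unfolded hO_26]
  have e27: "3 * \<phi> {2,7} = hodge (Omega \<and>\<^sub>w \<phi>) {2,7}" by (rule plus_eq[OF assms])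
  note e27 = e27[unfolded hO_27]
  have e28: "3 * \<phi> {2,8} = hodge (Omega \<and>\<^sub>w \<phi>) {2,8}" by (rule plus_eq[OF assms])
  note e28 = e28[unfolded hO_28]
  have e34: "3 * \<phi> {3,4} = hodge (Omega \<and>\<^sub>w \<phi>) {3,4}" by (rule plus_eq[OF assms])
  note e34 = e34[unfolded hO_34]
  have e35: "3 * \<phi> {3,5} = hodge (Omega \<and>\<^sub>w \<phi>) {3,5}" by (rule plus_eq[OF assms])
  note e35 = e35[unfolded hO_35]
  have e36: "3 * \<phi> {3,6} = hodge (Omega \<and>\<^sub>w \<phi>) {3,6}" by (rule plus_eq[OF assms])
  note e36 = e36[unfolded hO_36]
  have e37: "3 * \<phi> {3,7} = hodge (Omega \<and>\<^sub>w \<phi>) {3,7}" by (rule plus_eq[OF assms])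
  note e37 = e37[unfolded hO_37]
  have e38: "3 * \<phi> {3,8} = hodge (Omega \<and>\<^sub>w \<phi>) {3,8}" by (rule plus_eq[OF assms])
  note e38 = e38[unfolded hO_38]
  have e45: "3 * \<phi> {4,5} = hodge (Omega \<and>\<^sub>w \<phi>) {4,5}" by (rule plus_eq[OF assms])
  note e45 = e45[unfolded hO_45]
  have e46: "3 * \<phi> {4,6} = hodge (Omega \<and>\<^sub>w \<phi>) {4,6}" by (rule plus_eq[OF assms])
  note e46 = e46[unfolded hO_46]
  have e47: "3 * \<phi> {4,7} = hodge (Omega \<and>\<^sub>w \<phi>) {4,7}" by (rule plus_eq[OF assms])
  note e47 = e47[unfolded hO_47]
  have e48: "3 * \<phi> {4,8} = hodge (Omega \<and>\<^sub>w \<phi>) {4,8}" by (rule plus_eq[OF assms])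
  note e48 = e48[unfolded hO_48]
  have e56: "3 * \<phi> {5,6} = hodge (Omega \<and>\<^sub>w \<phi>) {5,6}" by (rule plus_eq[OF assms])
  note e56 = e56[unfolded hO_56]
  have e57: "3 * \<phi> {5,7} = hodge (Omega \<and>\<^sub>w \<phi>) {5,7}" by (rule plus_eq[OF assms])
  note e57 = e57[unfolded hO_57]
  have e58: "3 * \<phi> {5,8} = hodge (Omega \<and>\<^sub>w \<phi>) {5,8}" by (rule plus_eq[OF assms])
  note e58 = e58[unfolded hO_58]
  have e67: "3 * \<phi> {6,7} = hodge (Omega \<and>\<^sub>w \<phi>) {6,7}" by (rule plus_eq[OF assms])
  note e67 = e67[unfolded hO_67]
  have e68: "3 * \<phi> {6,8} = hodge (Omega \<and>\<^sub>w \<phi>) {6,8}" by (rule plus_eq[OF assms])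
  note e68 = e68[unfolded hO_68]
  have e78: "3 * \<phi> {7,8} = hodge (Omega \<and>\<^sub>w \<phi>) {7,8}" by (rule plus_eq[OF assms])
  note e78 = e78[unfolded hO_78]
  show "\<phi> {2,7} = - \<phi> {1,8}" using e12 e13 e14 e15 e16 e17 e18 e23 e24 e25 e26 e27 e28 e34 e35 e36 e37 e38 e45 e46 e47 e48 e56 e57 e58 e67 e68 e78 by linarith
  show "\<phi> {3,6} = \<phi> {1,8}" using e12 e13 e14 e15 e16 e17 e18 e23 e24 e25 e26 e27 e28 e34 e35 e36 e37 e38 e45 e46 e47 e48 e56 e57 e58 e67 e68 e78 by linarith
  show "\<phi> {4,5} = - \<phi> {1,8}" using e12 e13 e14 e15 e16 e17 e18 e23 e24 e25 e26 e27 e28 e34 e35 e36 e37 e38 e45 e46 e47 e48 e56 e57 e58 e67 e68 e78 by linarith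
  show "\<phi> {2,8} = \<phi> {1,7}" using e12 e13 e14 e15 e16 e17 e18 e23 e24 e25 e26 e27 e28 e34 e35 e36 e37 e38 e45 e46 e47 e48 e56 e57 e58 e67 e68 e78 by linarith
  show "\<phi> {3,5} = - \<phi> {1,7}" using e12 e13 e14 e15 e16 e17 e18 e23 e24 e25 e26 e27 e28 e34 e35 e36 e37 e38 e45 e46 e47 e48 e56 e57 e58 e67 e68 e78 by linarith
  show "\<phi> {4,6} = - \<phi> {1,7}" using e12 e13 e14 e15 e16 e17 e18 e23 e24 e25 e26 e27 e28 e34 e35 e36 e37 e38 e45 e46 e47 e48 e56 e57 e58 e67 e68 e78 by linarith
  show "\<phi> {2,5} = - \<phi> {1,6}" using e12 e13 e14 e15 e16 e17 e18 e23 e24 e25 e26 e27 e28 e34 e35 e36 e37 e38 e45 e46 e47 e48 e56 e57 e58 e67 e68 e78 by linarith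
  show "\<phi> {3,8} = - \<phi> {1,6}" using e12 e13 e14 e15 e16 e17 e18 e23 e24 e25 e26 e27 e28 e34 e35 e36 e37 e38 e45 e46 e47 e48 e56 e57 e58 e67 e68 e78 by linarith
  show "\<phi> {4,7} = \<phi> {1,6}" using e12 e13 e14 e15 e16 e17 e18 e23 e24 e25 e26 e27 e28 e34 e35 e36 e37 e38 e45 e46 e47 e48 e56 e57 e58 e67 e68 e78 by linarith
  show "\<phi> {2,6} = \<phi> {1,5}" using e12 e13 e14 e15 e16 e17 e18 e23 e24 e25 e26 e27 e28 e34 e35 e36 e37 e38 e45 e46 e47 e48 e56 e57 e58 e67 e68 e78 by linarith
  show "\<phi> {3,7} = \<phi> {1,5}" using e12 e13 e14 e15 e16 e17 e18 e23 e24 e25 e26 e27 e28 e34 e35 e36 e37 e38 e45 e46 e47 e48 e56 e57 e58 e67 e68 e78 by linarith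
  show "\<phi> {4,8} = \<phi> {1,5}" using e12 e13 e14 e15 e16 e17 e18 e23 e24 e25 e26 e27 e28 e34 e35 e36 e37 e38 e45 e46 e47 e48 e56 e57 e58 e67 e68 e78 by linarith
  show "\<phi> {2,3} = \<phi> {1,4}" using e12 e13 e14 e15 e16 e17 e18 e23 e24 e25 e26 e27 e28 e34 e35 e36 e37 e38 e45 e46 e47 e48 e56 e57 e58 e67 e68 e78 by linarith
  show "\<phi> {5,8} = - \<phi> {1,4}" using e12 e13 e14 e15 e16 e17 e18 e23 e24 e25 e26 e27 e28 e34 e35 e36 e37 e38 e45 e46 e47 e48 e56 e57 e58 e67 e68 e78 by linarith
  show "\<phi> {6,7} = - \<phi> {1,4}" using e12 e13 e14 e15 e16 e17 e18 e23 e24 e25 e26 e27 e28 e34 e35 e36 e37 e38 e45 e46 e47 e48 e56 e57 e58 e67 e68 e78 by linarith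
  show "\<phi> {2,4} = - \<phi> {1,3}" using e12 e13 e14 e15 e16 e17 e18 e23 e24 e25 e26 e27 e28 e34 e35 e36 e37 e38 e45 e46 e47 e48 e56 e57 e58 e67 e68 e78 by linarith
  show "\<phi> {5,7} = - \<phi> {1,3}" using e12 e13 e14 e15 e16 e17 e18 e23 e24 e25 e26 e27 e28 e34 e35 e36 e37 e38 e45 e46 e47 e48 e56 e57 e58 e67 e68 e78 by linarith
  show "\<phi> {6,8} = \<phi> {1,3}" using e12 e13 e14 e15 e16 e17 e18 e23 e24 e25 e26 e27 e28 e34 e35 e36 e37 e38 e45 e46 e47 e48 e56 e57 e58 e67 e68 e78 by linarith
  show "\<phi> {3,4} = \<phi> {1,2}" using e12 e13 e14 e15 e16 e17 e18 e23 e24 e25 e26 e27 e28 e34 e35 e36 e37 e38 e45 e46 e47 e48 e56 e57 e58 e67 e68 e78 by linarith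
  show "\<phi> {5,6} = - \<phi> {1,2}" using e12 e13 e14 e15 e16 e17 e18 e23 e24 e25 e26 e27 e28 e34 e35 e36 e37 e38 e45 e46 e47 e48 e56 e57 e58 e67 e68 e78 by linarith
  show "\<phi> {7,8} = - \<phi> {1,2}" using e12 e13 e14 e15 e16 e17 e18 e23 e24 e25 e26 e27 e28 e34 e35 e36 e37 e38 e45 e46 e47 e48 e56 e57 e58 e67 e68 e78 by linarith
qed

lemma main_12:
  assumes "\<phi> \<in> Lambda2_plus" "k \<in> {1..8}" "l \<in> {1..8}"
  shows "2 * Pplus (xf \<phi> k l) {1,2} = (if k = l then 1 else 0) * \<phi> {1,2}"
proof -
  have k: "k = 1 \<or> k = 2 \<or> k = 3 \<or> k = 4 \<or> k = 5 \<or> k = 6 \<or> k = 7 \<or> k = 8" using assms(2) by auto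
  have l: "l = 1 \<or> l = 2 \<or> l = 3 \<or> l = 4 \<or> l = 5 \<or> l = 6 \<or> l = 7 \<or> l = 8" using assms(3) by auto
  show ?thesis unfolding Pplus_at hO_12 using k l
    by (elim disjE) (simp_all add: xf_pair Phi_def rels[OF assms(1)])
qed


lemma term0:
  assumes "card C \<noteq> 6" "is_kform 2 x" "card A = 4"
  shows "(ind A c \<and>\<^sub>w x) C = 0"
proof (cases "finite C \<and> A \<subseteq> C \<and> x (C - A) \<noteq> 0")
  case True
  then have "card (C - A) = 2" using assms(2) unfolding is_kform_def by blast
  moreover have "finite A" using True finite_subset by blast
  ultimately have "card C = 6" using True assms(3) by (simp add: card_Diff_subset)
  then show ?thesis using assms(1) by simp
next
  case False
  then show ?thesis unfolding wedge_ind by auto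
qed

lemma Omega_wedge0:
  assumes "card C \<noteq> 6" "is_kform 2 x"
  shows "(Omega \<and>\<^sub>w x) C = 0"
  unfolding Omega_def mono4_1256 mono4_1278 mono4_3456 mono4_3478 mono4_1368 mono4_1357 mono4_2468 mono4_2457
  mono4_1467 mono4_1458 mono4_2367 mono4_2358 mono4_1234 mono4_5678
  by (simp add: wedge_fadd wedge_fsub wedge_fscale term0[OF assms])

lemma hodge_Omega0:
  assumes "is_kform 2 x" "hodge (Omega \<and>\<^sub>w x) S \<noteq> 0"
  shows "S \<subseteq> {1..8} \<and> card S = 2"
proof -
  have S: "S \<subseteq> {1..8}" and C: "(Omega \<and>\<^sub>w x) ({1..8} - S) \<noteq> 0"
    using assms(2) unfolding hodge_def by (auto split: if_splits)
  have "card ({1..8} - S) = 6" using C Omega_wedge0[OF _ assms(1)] by blast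
  moreover have "finite S" using S finite_subset by blast
  ultimately have "card S = 2" using S by (simp add: card_Diff_subset)
  then show ?thesis using S by simp
qed

lemma bas_interior_kform:
  assumes "is_kform 2 \<phi>" "k \<in> {1..8}"
  shows "is_kform 2 (bas k \<and>\<^sub>w interior l \<phi>)"
  unfolding is_kform_def
proof (intro allI impI)
  fix S assume nz: "(bas k \<and>\<^sub>w interior l \<phi>) S \<noteq> 0"
  then have fS: "finite S" and kS: "k \<in> S" and nz2: "interior l \<phi> (S - {k}) \<noteq> 0"
    unfolding bas_ind wedge_ind by (auto split: if_splits)
  then have lS: "l \<notin> S - {k}" and nz3: "\<phi> (insert l (S - {k})) \<noteq> 0"
    unfolding interior_def by (auto split: if_splits)
  then have sub: "insert l (S - {k}) \<subseteq> {1..8}" and c2: "card (insert l (S - {k})) = 2"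
    using assms(1) unfolding is_kform_def by blast+
  have "card (S - {k}) = 1" using c2 lS fS by simp
  then have "card S = 2" using fS kS by (simp add: card_Diff_singleton_if) 
  moreover have "S \<subseteq> {1..8}" using sub kS assms(2) by blast
  ultimately show "S \<subseteq> {1..8} \<and> card S = 2" by simp
qed

lemma xf_kform:
  assumes "is_kform 2 \<phi>" "k \<in> {1..8}" "l \<in> {1..8}"
  shows "is_kform 2 (xf \<phi> k l)"
  using bas_interior_kform[OF assms(1,2), of l] bas_interior_kform[OF assms(1,3), of k]
  unfolding xf_def is_kform_def fadd_def by (metis add.left_neutral)

lemma main_13:
  assumes "\<phi> \<in> Lambda2_plus" "k \<in> {1..8}" "l \<in> {1..8}"
  shows "2 * Pplus (xf \<phi> k l) {1,3} = (if k = l then 1 else 0) * \<phi> {1,3}"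
proof -
  have k: "k = 1 \<or> k = 2 \<or> k = 3 \<or> k = 4 \<or> k = 5 \<or> k = 6 \<or> k = 7 \<or> k = 8" using assms(2) by auto
  have l: "l = 1 \<or> l = 2 \<or> l = 3 \<or> l = 4 \<or> l = 5 \<or> l = 6 \<or> l = 7 \<or> l = 8" using assms(3) by auto
  show ?thesis unfolding Pplus_at hO_13 using k l
    by (elim disjE) (simp_all add: xf_pair Phi_def rels[OF assms(1)])
qed

lemma main_14:
  assumes "\<phi> \<in> Lambda2_plus" "k \<in> {1..8}" "l \<in> {1..8}"
  shows "2 * Pplus (xf \<phi> k l) {1,4} = (if k = l then 1 else 0) * \<phi> {1,4}"
proof -
  have k: "k = 1 \<or> k = 2 \<or> k = 3 \<or> k = 4 \<or> k = 5 \<or> k = 6 \<or> k = 7 \<or> k = 8" using assms(2) by auto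
  have l: "l = 1 \<or> l = 2 \<or> l = 3 \<or> l = 4 \<or> l = 5 \<or> l = 6 \<or> l = 7 \<or> l = 8" using assms(3) by auto
  show ?thesis unfolding Pplus_at hO_14 using k l
    by (elim disjE) (simp_all add: xf_pair Phi_def rels[OF assms(1)])
qed

lemma main_15:
  assumes "\<phi> \<in> Lambda2_plus" "k \<in> {1..8}" "l \<in> {1..8}"
  shows "2 * Pplus (xf \<phi> k l) {1,5} = (if k = l then 1 else 0) * \<phi> {1,5}"
proof -
  have k: "k = 1 \<or> k = 2 \<or> k = 3 \<or> k = 4 \<or> k = 5 \<or> k = 6 \<or> k = 7 \<or> k = 8" using assms(2) by auto
  have l: "l = 1 \<or> l = 2 \<or> l = 3 \<or> l = 4 \<or> l = 5 \<or> l = 6 \<or> l = 7 \<or> l = 8" using assms(3) by auto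
  show ?thesis unfolding Pplus_at hO_15 using k l
    by (elim disjE) (simp_all add: xf_pair Phi_def rels[OF assms(1)])
qed

lemma main_16:
  assumes "\<phi> \<in> Lambda2_plus" "k \<in> {1..8}" "l \<in> {1..8}"
  shows "2 * Pplus (xf \<phi> k l) {1,6} = (if k = l then 1 else 0) * \<phi> {1,6}"
proof -
  have k: "k = 1 \<or> k = 2 \<or> k = 3 \<or> k = 4 \<or> k = 5 \<or> k = 6 \<or> k = 7 \<or> k = 8" using assms(2) by auto
  have l: "l = 1 \<or> l = 2 \<or> l = 3 \<or> l = 4 \<or> l = 5 \<or> l = 6 \<or> l = 7 \<or> l = 8" using assms(3) by auto
  show ?thesis unfolding Pplus_at hO_16 using k l
    by (elim disjE) (simp_all add: xf_pair Phi_def rels[OF assms(1)])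
qed

lemma main_17:
  assumes "\<phi> \<in> Lambda2_plus" "k \<in> {1..8}" "l \<in> {1..8}"
  shows "2 * Pplus (xf \<phi> k l) {1,7} = (if k = l then 1 else 0) * \<phi> {1,7}"
proof -
  have k: "k = 1 \<or> k = 2 \<or> k = 3 \<or> k = 4 \<or> k = 5 \<or> k = 6 \<or> k = 7 \<or> k = 8" using assms(2) by auto
  have l: "l = 1 \<or> l = 2 \<or> l = 3 \<or> l = 4 \<or> l = 5 \<or> l = 6 \<or> l = 7 \<or> l = 8" using assms(3) by auto
  show ?thesis unfolding Pplus_at hO_17 using k l
    by (elim disjE) (simp_all add: xf_pair Phi_def rels[OF assms(1)])
qed

lemma main_18:
  assumes "\<phi> \<in> Lambda2_plus" "k \<in> {1..8}" "l \<in> {1..8}"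
  shows "2 * Pplus (xf \<phi> k l) {1,8} = (if k = l then 1 else 0) * \<phi> {1,8}"
proof -
  have k: "k = 1 \<or> k = 2 \<or> k = 3 \<or> k = 4 \<or> k = 5 \<or> k = 6 \<or> k = 7 \<or> k = 8" using assms(2) by auto
  have l: "l = 1 \<or> l = 2 \<or> l = 3 \<or> l = 4 \<or> l = 5 \<or> l = 6 \<or> l = 7 \<or> l = 8" using assms(3) by auto
  show ?thesis unfolding Pplus_at hO_18 using k l
    by (elim disjE) (simp_all add: xf_pair Phi_def rels[OF assms(1)])
qed

lemma main_23:
  assumes "\<phi> \<in> Lambda2_plus" "k \<in> {1..8}" "l \<in> {1..8}"
  shows "2 * Pplus (xf \<phi> k l) {2,3} = (if k = l then 1 else 0) * \<phi> {2,3}"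
proof -
  have k: "k = 1 \<or> k = 2 \<or> k = 3 \<or> k = 4 \<or> k = 5 \<or> k = 6 \<or> k = 7 \<or> k = 8" using assms(2) by auto
  have l: "l = 1 \<or> l = 2 \<or> l = 3 \<or> l = 4 \<or> l = 5 \<or> l = 6 \<or> l = 7 \<or> l = 8" using assms(3) by auto
  show ?thesis unfolding Pplus_at hO_23 using k l
    by (elim disjE) (simp_all add: xf_pair Phi_def rels[OF assms(1)])
qed

lemma main_24:
  assumes "\<phi> \<in> Lambda2_plus" "k \<in> {1..8}" "l \<in> {1..8}"
  shows "2 * Pplus (xf \<phi> k l) {2,4} = (if k = l then 1 else 0) * \<phi> {2,4}"
proof -
  have k: "k = 1 \<or> k = 2 \<or> k = 3 \<or> k = 4 \<or> k = 5 \<or> k = 6 \<or> k = 7 \<or> k = 8" using assms(2) by auto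
  have l: "l = 1 \<or> l = 2 \<or> l = 3 \<or> l = 4 \<or> l = 5 \<or> l = 6 \<or> l = 7 \<or> l = 8" using assms(3) by auto
  show ?thesis unfolding Pplus_at hO_24 using k l
    by (elim disjE) (simp_all add: xf_pair Phi_def rels[OF assms(1)])
qed

lemma main_25:
  assumes "\<phi> \<in> Lambda2_plus" "k \<in> {1..8}" "l \<in> {1..8}"
  shows "2 * Pplus (xf \<phi> k l) {2,5} = (if k = l then 1 else 0) * \<phi> {2,5}"
proof -
  have k: "k = 1 \<or> k = 2 \<or> k = 3 \<or> k = 4 \<or> k = 5 \<or> k = 6 \<or> k = 7 \<or> k = 8" using assms(2) by auto
  have l: "l = 1 \<or> l = 2 \<or> l = 3 \<or> l = 4 \<or> l = 5 \<or> l = 6 \<or> l = 7 \<or> l = 8" using assms(3) by auto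
  show ?thesis unfolding Pplus_at hO_25 using k l
    by (elim disjE) (simp_all add: xf_pair Phi_def rels[OF assms(1)])
qed

lemma main_26:
  assumes "\<phi> \<in> Lambda2_plus" "k \<in> {1..8}" "l \<in> {1..8}"
  shows "2 * Pplus (xf \<phi> k l) {2,6} = (if k = l then 1 else 0) * \<phi> {2,6}"
proof -
  have k: "k = 1 \<or> k = 2 \<or> k = 3 \<or> k = 4 \<or> k = 5 \<or> k = 6 \<or> k = 7 \<or> k = 8" using assms(2) by auto
  have l: "l = 1 \<or> l = 2 \<or> l = 3 \<or> l = 4 \<or> l = 5 \<or> l = 6 \<or> l = 7 \<or> l = 8" using assms(3) by auto
  show ?thesis unfolding Pplus_at hO_26 using k l
    by (elim disjE) (simp_all add: xf_pair Phi_def rels[OF assms(1)])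
qed

lemma main_27:
  assumes "\<phi> \<in> Lambda2_plus" "k \<in> {1..8}" "l \<in> {1..8}"
  shows "2 * Pplus (xf \<phi> k l) {2,7} = (if k = l then 1 else 0) * \<phi> {2,7}"
proof -
  have k: "k = 1 \<or> k = 2 \<or> k = 3 \<or> k = 4 \<or> k = 5 \<or> k = 6 \<or> k = 7 \<or> k = 8" using assms(2) by auto
  have l: "l = 1 \<or> l = 2 \<or> l = 3 \<or> l = 4 \<or> l = 5 \<or> l = 6 \<or> l = 7 \<or> l = 8" using assms(3) by auto
  show ?thesis unfolding Pplus_at hO_27 using k l
    by (elim disjE) (simp_all add: xf_pair Phi_def rels[OF assms(1)])
qed

lemma main_28:
  assumes "\<phi> \<in> Lambda2_plus" "k \<in> {1..8}" "l \<in> {1..8}"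
  shows "2 * Pplus (xf \<phi> k l) {2,8} = (if k = l then 1 else 0) * \<phi> {2,8}"
proof -
  have k: "k = 1 \<or> k = 2 \<or> k = 3 \<or> k = 4 \<or> k = 5 \<or> k = 6 \<or> k = 7 \<or> k = 8" using assms(2) by auto
  have l: "l = 1 \<or> l = 2 \<or> l = 3 \<or> l = 4 \<or> l = 5 \<or> l = 6 \<or> l = 7 \<or> l = 8" using assms(3) by auto
  show ?thesis unfolding Pplus_at hO_28 using k l
    by (elim disjE) (simp_all add: xf_pair Phi_def rels[OF assms(1)])
qed

lemma main_34:
  assumes "\<phi> \<in> Lambda2_plus" "k \<in> {1..8}" "l \<in> {1..8}"
  shows "2 * Pplus (xf \<phi> k l) {3,4} = (if k = l then 1 else 0) * \<phi> {3,4}"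
proof -
  have k: "k = 1 \<or> k = 2 \<or> k = 3 \<or> k = 4 \<or> k = 5 \<or> k = 6 \<or> k = 7 \<or> k = 8" using assms(2) by auto
  have l: "l = 1 \<or> l = 2 \<or> l = 3 \<or> l = 4 \<or> l = 5 \<or> l = 6 \<or> l = 7 \<or> l = 8" using assms(3) by auto
  show ?thesis unfolding Pplus_at hO_34 using k l
    by (elim disjE) (simp_all add: xf_pair Phi_def rels[OF assms(1)])
qed

lemma main_35:
  assumes "\<phi> \<in> Lambda2_plus" "k \<in> {1..8}" "l \<in> {1..8}"
  shows "2 * Pplus (xf \<phi> k l) {3,5} = (if k = l then 1 else 0) * \<phi> {3,5}"
proof -
  have k: "k = 1 \<or> k = 2 \<or> k = 3 \<or> k = 4 \<or> k = 5 \<or> k = 6 \<or> k = 7 \<or> k = 8" using assms(2) by auto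
  have l: "l = 1 \<or> l = 2 \<or> l = 3 \<or> l = 4 \<or> l = 5 \<or> l = 6 \<or> l = 7 \<or> l = 8" using assms(3) by auto
  show ?thesis unfolding Pplus_at hO_35 using k l
    by (elim disjE) (simp_all add: xf_pair Phi_def rels[OF assms(1)])
qed

lemma main_36:
  assumes "\<phi> \<in> Lambda2_plus" "k \<in> {1..8}" "l \<in> {1..8}"
  shows "2 * Pplus (xf \<phi> k l) {3,6} = (if k = l then 1 else 0) * \<phi> {3,6}"
proof -
  have k: "k = 1 \<or> k = 2 \<or> k = 3 \<or> k = 4 \<or> k = 5 \<or> k = 6 \<or> k = 7 \<or> k = 8" using assms(2) by auto
  have l: "l = 1 \<or> l = 2 \<or> l = 3 \<or> l = 4 \<or> l = 5 \<or> l = 6 \<or> l = 7 \<or> l = 8" using assms(3) by auto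
  show ?thesis unfolding Pplus_at hO_36 using k l
    by (elim disjE) (simp_all add: xf_pair Phi_def rels[OF assms(1)])
qed

lemma main_37:
  assumes "\<phi> \<in> Lambda2_plus" "k \<in> {1..8}" "l \<in> {1..8}"
  shows "2 * Pplus (xf \<phi> k l) {3,7} = (if k = l then 1 else 0) * \<phi> {3,7}"
proof -
  have k: "k = 1 \<or> k = 2 \<or> k = 3 \<or> k = 4 \<or> k = 5 \<or> k = 6 \<or> k = 7 \<or> k = 8" using assms(2) by auto
  have l: "l = 1 \<or> l = 2 \<or> l = 3 \<or> l = 4 \<or> l = 5 \<or> l = 6 \<or> l = 7 \<or> l = 8" using assms(3) by auto
  show ?thesis unfolding Pplus_at hO_37 using k l
    by (elim disjE) (simp_all add: xf_pair Phi_def rels[OF assms(1)])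
qed

lemma main_38:
  assumes "\<phi> \<in> Lambda2_plus" "k \<in> {1..8}" "l \<in> {1..8}"
  shows "2 * Pplus (xf \<phi> k l) {3,8} = (if k = l then 1 else 0) * \<phi> {3,8}"
proof -
  have k: "k = 1 \<or> k = 2 \<or> k = 3 \<or> k = 4 \<or> k = 5 \<or> k = 6 \<or> k = 7 \<or> k = 8" using assms(2) by auto
  have l: "l = 1 \<or> l = 2 \<or> l = 3 \<or> l = 4 \<or> l = 5 \<or> l = 6 \<or> l = 7 \<or> l = 8" using assms(3) by auto
  show ?thesis unfolding Pplus_at hO_38 using k l
    by (elim disjE) (simp_all add: xf_pair Phi_def rels[OF assms(1)])
qed

lemma main_45:
  assumes "\<phi> \<in> Lambda2_plus" "k \<in> {1..8}" "l \<in> {1..8}"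
  shows "2 * Pplus (xf \<phi> k l) {4,5} = (if k = l then 1 else 0) * \<phi> {4,5}"
proof -
  have k: "k = 1 \<or> k = 2 \<or> k = 3 \<or> k = 4 \<or> k = 5 \<or> k = 6 \<or> k = 7 \<or> k = 8" using assms(2) by auto
  have l: "l = 1 \<or> l = 2 \<or> l = 3 \<or> l = 4 \<or> l = 5 \<or> l = 6 \<or> l = 7 \<or> l = 8" using assms(3) by auto
  show ?thesis unfolding Pplus_at hO_45 using k l
    by (elim disjE) (simp_all add: xf_pair Phi_def rels[OF assms(1)])
qed

lemma main_46:
  assumes "\<phi> \<in> Lambda2_plus" "k \<in> {1..8}" "l \<in> {1..8}"
  shows "2 * Pplus (xf \<phi> k l) {4,6} = (if k = l then 1 else 0) * \<phi> {4,6}"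
proof -
  have k: "k = 1 \<or> k = 2 \<or> k = 3 \<or> k = 4 \<or> k = 5 \<or> k = 6 \<or> k = 7 \<or> k = 8" using assms(2) by auto
  have l: "l = 1 \<or> l = 2 \<or> l = 3 \<or> l = 4 \<or> l = 5 \<or> l = 6 \<or> l = 7 \<or> l = 8" using assms(3) by auto
  show ?thesis unfolding Pplus_at hO_46 using k l
    by (elim disjE) (simp_all add: xf_pair Phi_def rels[OF assms(1)])
qed

lemma main_47:
  assumes "\<phi> \<in> Lambda2_plus" "k \<in> {1..8}" "l \<in> {1..8}"
  shows "2 * Pplus (xf \<phi> k l) {4,7} = (if k = l then 1 else 0) * \<phi> {4,7}"
proof -
  have k: "k = 1 \<or> k = 2 \<or> k = 3 \<or> k = 4 \<or> k = 5 \<or> k = 6 \<or> k = 7 \<or> k = 8" using assms(2) by auto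
  have l: "l = 1 \<or> l = 2 \<or> l = 3 \<or> l = 4 \<or> l = 5 \<or> l = 6 \<or> l = 7 \<or> l = 8" using assms(3) by auto
  show ?thesis unfolding Pplus_at hO_47 using k l
    by (elim disjE) (simp_all add: xf_pair Phi_def rels[OF assms(1)])
qed

lemma main_48:
  assumes "\<phi> \<in> Lambda2_plus" "k \<in> {1..8}" "l \<in> {1..8}"
  shows "2 * Pplus (xf \<phi> k l) {4,8} = (if k = l then 1 else 0) * \<phi> {4,8}"
proof -
  have k: "k = 1 \<or> k = 2 \<or> k = 3 \<or> k = 4 \<or> k = 5 \<or> k = 6 \<or> k = 7 \<or> k = 8" using assms(2) by auto
  have l: "l = 1 \<or> l = 2 \<or> l = 3 \<or> l = 4 \<or> l = 5 \<or> l = 6 \<or> l = 7 \<or> l = 8" using assms(3) by auto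
  show ?thesis unfolding Pplus_at hO_48 using k l
    by (elim disjE) (simp_all add: xf_pair Phi_def rels[OF assms(1)])
qed

lemma main_56:
  assumes "\<phi> \<in> Lambda2_plus" "k \<in> {1..8}" "l \<in> {1..8}"
  shows "2 * Pplus (xf \<phi> k l) {5,6} = (if k = l then 1 else 0) * \<phi> {5,6}"
proof -
  have k: "k = 1 \<or> k = 2 \<or> k = 3 \<or> k = 4 \<or> k = 5 \<or> k = 6 \<or> k = 7 \<or> k = 8" using assms(2) by auto
  have l: "l = 1 \<or> l = 2 \<or> l = 3 \<or> l = 4 \<or> l = 5 \<or> l = 6 \<or> l = 7 \<or> l = 8" using assms(3) by auto
  show ?thesis unfolding Pplus_at hO_56 using k l
    by (elim disjE) (simp_all add: xf_pair Phi_def rels[OF assms(1)])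
qed

lemma main_57:
  assumes "\<phi> \<in> Lambda2_plus" "k \<in> {1..8}" "l \<in> {1..8}"
  shows "2 * Pplus (xf \<phi> k l) {5,7} = (if k = l then 1 else 0) * \<phi> {5,7}"
proof -
  have k: "k = 1 \<or> k = 2 \<or> k = 3 \<or> k = 4 \<or> k = 5 \<or> k = 6 \<or> k = 7 \<or> k = 8" using assms(2) by auto
  have l: "l = 1 \<or> l = 2 \<or> l = 3 \<or> l = 4 \<or> l = 5 \<or> l = 6 \<or> l = 7 \<or> l = 8" using assms(3) by auto
  show ?thesis unfolding Pplus_at hO_57 using k l
    by (elim disjE) (simp_all add: xf_pair Phi_def rels[OF assms(1)])
qed

lemma main_58:
  assumes "\<phi> \<in> Lambda2_plus" "k \<in> {1..8}" "l \<in> {1..8}"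
  shows "2 * Pplus (xf \<phi> k l) {5,8} = (if k = l then 1 else 0) * \<phi> {5,8}"
proof -
  have k: "k = 1 \<or> k = 2 \<or> k = 3 \<or> k = 4 \<or> k = 5 \<or> k = 6 \<or> k = 7 \<or> k = 8" using assms(2) by auto
  have l: "l = 1 \<or> l = 2 \<or> l = 3 \<or> l = 4 \<or> l = 5 \<or> l = 6 \<or> l = 7 \<or> l = 8" using assms(3) by auto
  show ?thesis unfolding Pplus_at hO_58 using k l
    by (elim disjE) (simp_all add: xf_pair Phi_def rels[OF assms(1)])
qed

lemma main_67:
  assumes "\<phi> \<in> Lambda2_plus" "k \<in> {1..8}" "l \<in> {1..8}"
  shows "2 * Pplus (xf \<phi> k l) {6,7} = (if k = l then 1 else 0) * \<phi> {6,7}"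
proof -
  have k: "k = 1 \<or> k = 2 \<or> k = 3 \<or> k = 4 \<or> k = 5 \<or> k = 6 \<or> k = 7 \<or> k = 8" using assms(2) by auto
  have l: "l = 1 \<or> l = 2 \<or> l = 3 \<or> l = 4 \<or> l = 5 \<or> l = 6 \<or> l = 7 \<or> l = 8" using assms(3) by auto
  show ?thesis unfolding Pplus_at hO_67 using k l
    by (elim disjE) (simp_all add: xf_pair Phi_def rels[OF assms(1)])
qed

lemma main_68:
  assumes "\<phi> \<in> Lambda2_plus" "k \<in> {1..8}" "l \<in> {1..8}"
  shows "2 * Pplus (xf \<phi> k l) {6,8} = (if k = l then 1 else 0) * \<phi> {6,8}"
proof -
  have k: "k = 1 \<or> k = 2 \<or> k = 3 \<or> k = 4 \<or> k = 5 \<or> k = 6 \<or> k = 7 \<or> k = 8" using assms(2) by auto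
  have l: "l = 1 \<or> l = 2 \<or> l = 3 \<or> l = 4 \<or> l = 5 \<or> l = 6 \<or> l = 7 \<or> l = 8" using assms(3) by auto
  show ?thesis unfolding Pplus_at hO_68 using k l
    by (elim disjE) (simp_all add: xf_pair Phi_def rels[OF assms(1)])
qed

lemma main_78:
  assumes "\<phi> \<in> Lambda2_plus" "k \<in> {1..8}" "l \<in> {1..8}"
  shows "2 * Pplus (xf \<phi> k l) {7,8} = (if k = l then 1 else 0) * \<phi> {7,8}"
proof -
  have k: "k = 1 \<or> k = 2 \<or> k = 3 \<or> k = 4 \<or> k = 5 \<or> k = 6 \<or> k = 7 \<or> k = 8" using assms(2) by auto
  have l: "l = 1 \<or> l = 2 \<or> l = 3 \<or> l = 4 \<or> l = 5 \<or> l = 6 \<or> l = 7 \<or> l = 8" using assms(3) by auto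
  show ?thesis unfolding Pplus_at hO_78 using k l
    by (elim disjE) (simp_all add: xf_pair Phi_def rels[OF assms(1)])
qed

theorem lemma2p1:
  fixes \<phi> :: form and k l :: nat
  assumes "\<phi> \<in> Lambda2_plus" and "k \<in> {1..8}" and "l \<in> {1..8}"
  shows "2 *\<^sub>f Pplus ((bas k \<and>\<^sub>w interior l \<phi>) +\<^sub>f (bas l \<and>\<^sub>w interior k \<phi>))
         = (if k = l then 1 else 0) *\<^sub>f \<phi>"
proof -
  have xf: "(bas k \<and>\<^sub>w interior l \<phi>) +\<^sub>f (bas l \<and>\<^sub>w interior k \<phi>) = xf \<phi> k l"
    by (simp add: xf_def)
  have kf: "is_kform 2 \<phi>" using assms(1) unfolding Lambda2_plus_def by simp
  have xk: "is_kform 2 (xf \<phi> k l)" using xf_kform[OF kf assms(2,3)] .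
  show ?thesis unfolding xf
  proof (rule ext)
    fix S
    show "(2 *\<^sub>f Pplus (xf \<phi> k l)) S = ((if k = l then 1 else 0) *\<^sub>f \<phi>) S"
    proof (cases "S \<subseteq> {1..8} \<and> card S = 2")
      case False
      then have "xf \<phi> k l S = 0" "\<phi> S = 0" "hodge (Omega \<and>\<^sub>w xf \<phi> k l) S = 0"
        using kf xk hodge_Omega0[OF xk, of S] unfolding is_kform_def by blast+
      then show ?thesis by (simp add: fscale_def Pplus_at)
    next
      case True
      then obtain a b where ab: "S = {a,b}" "a \<noteq> b" by (meson card_2_iff)
      have abr: "a \<in> {1..8}" "b \<in> {1..8}" using True ab by auto
      obtain i j where ij: "S = {i,j}" "i < j" "i \<in> {1..8}" "j \<in> {1..8}"
      proof (cases "a < b")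
        case True
        then show ?thesis using that ab abr by blast
      next
        case False
        then have "b < a" using ab by simp
        moreover have "S = {b,a}" using ab by auto
        ultimately show ?thesis using that abr by blast
      qed
      have i: "i = 1 \<or> i = 2 \<or> i = 3 \<or> i = 4 \<or> i = 5 \<or> i = 6 \<or> i = 7 \<or> i = 8" using ij by auto
      have j: "j = 1 \<or> j = 2 \<or> j = 3 \<or> j = 4 \<or> j = 5 \<or> j = 6 \<or> j = 7 \<or> j = 8" using ij by auto
      show ?thesis unfolding ij(1) fscale_def using i j ij(2)
        apply (elim disjE)
        apply (simp_all only: main_12[OF assms] main_13[OF assms] main_14[OF assms] main_15[OF assms] main_16[OF assms] main_17[OF assms] main_18[OF assms] main_23[OF assms] main_24[OF assms] main_25[OF assms] main_26[OF assms] main_27[OF assms] main_28[OF assms] main_34[OF assms] main_35[OF assms] main_36[OF assms] main_37[OF assms] main_38[OF assms] main_45[OF assms] main_46[OF assms] main_47[OF assms] main_48[OF assms] main_56[OF assms] main_57[OF assms] main_58[OF assms] main_67[OF assms] main_68[OF assms] main_78[OF assms])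
        done
    qed
  qed
qed
end
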